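(* Let $\{\sigma_j\colon\mathcal{A}^+\to\mathcal{B}_j^+\}_{j\in J}$ be a family of morphisms such that for every $a\in\mathcal{A}$ the length $\ell_a:=|\sigma_j(a)|$ does not depend on $j\in J$, and let $u,v\in\mathcal{A}^+$ with $|u|\ge\ell:=\sum_{a\in\mathcal{A}}\ell_a$. Assume that $u$ and $v$ start with different letters and that $\sigma_j(u)$ is a prefix of $\sigma_j(v)$ for every $j\in J$. Then there exist a letter-onto morphism $q\colon\mathcal{A}^+\to\mathcal{C}^+$ with $\#\mathcal{C}<\#\mathcal{A}$ and morphisms $\{p_j\colon\mathcal{C}^+\to\mathcal{B}_j^+\}_{j\in J}$ such that for every $c\in\mathcal{C}$ the length $|p_j(c)|$ does not depend on $j\in J$, and $\sigma_j=p_jq$ for every $j\in J$.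
   Context: Alphabets are finite sets; $\mathcal{A}^+$ is the free semigroup of nonempty finite words over $\mathcal{A}$; a morphism is a semigroup homomorphism (determined by images of letters). A word $w$ is a prefix of $w'$ if $w'=ws$ for some possibly empty word $s$. A morphism $q\colon\mathcal{A}^+\to\mathcal{C}^+$ is letter-onto if every letter of $\mathcal{C}$ occurs in some $q(a)$. *)

theory Defs
  imports Main "HOL-Library.Sublist"
begin

text \<open>A morphism A+ -> B+ is given by
  the images of letters: a map f with f a a nonempty word over B for every a in A.\<close>

definition morph_app :: "('a \<Rightarrow> 'b list) \<Rightarrow> 'a list \<Rightarrow> 'b list" where
  "morph_app f w = concat (map f w)"

definition is_word :: "'a set \<Rightarrow> 'a list \<Rightarrow> bool" where
  "is_word A w \<longleftrightarrow> w \<noteq> [] \<and> set w \<subseteq> A"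

definition is_morphism :: "'a set \<Rightarrow> 'b set \<Rightarrow> ('a \<Rightarrow> 'b list) \<Rightarrow> bool" where
  "is_morphism A B f \<longleftrightarrow> (\<forall>a\<in>A. is_word B (f a))"

definition letter_onto :: "'a set \<Rightarrow> 'c set \<Rightarrow> ('a \<Rightarrow> 'c list) \<Rightarrow> bool" where
  "letter_onto A C q \<longleftrightarrow> (\<forall>c\<in>C. \<exists>a\<in>A. c \<in> set (q a))"

end

theory Submission
  imports Defs
begin

definition good :: "'a set \<Rightarrow> 'j set \<Rightarrow> ('j \<Rightarrow> 'b set) \<Rightarrow> ('j \<Rightarrow> 'a \<Rightarrow> 'b list) \<Rightarrow> bool" where
 "good A J B \<sigma> \<longleftrightarrow> (\<exists>(C :: 'a set) (q :: 'a \<Rightarrow> 'a list) (p :: 'j \<Rightarrow> 'a \<Rightarrow> 'b list).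
           finite C \<and> card C < card A \<and>
           is_morphism A C q \<and> letter_onto A C q \<and>
           (\<forall>j\<in>J. is_morphism C (B j) (p j)) \<and>
           (\<forall>c\<in>C. \<forall>j1\<in>J. \<forall>j2\<in>J. length (p j1 c) = length (p j2 c)) \<and>
           (\<forall>j\<in>J. \<forall>a\<in>A. \<sigma> j a = morph_app (p j) (q a)))"

lemma ma_Nil[simp]: "morph_app f [] = []" by (simp add: morph_app_def)
lemma ma_Cons[simp]: "morph_app f (x#xs) = f x @ morph_app f xs" by (simp add: morph_app_def)
lemma ma_append[simp]: "morph_app f (xs@ys) = morph_app f xs @ morph_app f ys" by (simp add: morph_app_def)
lemma ma_set: "set (morph_app f w) = (\<Union>a\<in>set w. set (f a))" by (simp add: morph_app_def)
lemma ma_comp: "morph_app f (morph_app g w) = morph_app (\<lambda>a. morph_app f (g a)) w"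
  by (induction w) auto
lemma ma_cong: "(\<forall>a\<in>set w. f a = g a) \<Longrightarrow> morph_app f w = morph_app g w"
  by (induction w) auto
lemma ma_len: "(\<forall>a\<in>set w. f a \<noteq> []) \<Longrightarrow> length (morph_app f w) \<ge> length w"
proof (induction w)
  case (Cons a w) then show ?case by (cases "f a") auto
qed simp
lemma ma_word: "is_morphism A C f \<Longrightarrow> is_word A w \<Longrightarrow> is_word C (morph_app f w)"
  unfolding is_word_def is_morphism_def
  by (cases w) (auto simp: ma_set)

lemma merge:
  assumes "finite A" "x \<in> A" "y \<in> A" "x \<noteq> y" "\<forall>j\<in>J. \<sigma> j x = \<sigma> j y"
    "\<forall>j\<in>J. is_morphism A (B j) (\<sigma> j)" "\<forall>j\<in>J. \<forall>a\<in>A. length (\<sigma> j a) = ell a"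
  shows "good A J B \<sigma>"
  unfolding good_def
proof (intro exI conjI)
  let ?C = "A - {y}"
  let ?q = "\<lambda>a. if a = y then [x] else [a]"
  show "finite ?C" using assms by simp
  show "card ?C < card A" using assms(1,3) by (rule card_Diff1_less)
  show "is_morphism A ?C ?q" using assms by (auto simp: is_morphism_def is_word_def)
  show "letter_onto A ?C ?q" by (auto simp: letter_onto_def)
  show "\<forall>j\<in>J. is_morphism ?C (B j) (\<sigma> j)" using assms(6) by (auto simp: is_morphism_def)
  show "\<forall>c\<in>?C. \<forall>j1\<in>J. \<forall>j2\<in>J. length (\<sigma> j1 c) = length (\<sigma> j2 c)" using assms(7) by auto
  show "\<forall>j\<in>J. \<forall>a\<in>A. \<sigma> j a = morph_app (\<sigma> j) (?q a)" using assms(5) by auto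
qed

lemma lift:
  fixes A :: "'a set" and J :: "'j set" and B :: "'j \<Rightarrow> 'b set"
    and \<sigma> \<sigma>' :: "'j \<Rightarrow> 'a \<Rightarrow> 'b list" and \<tau> :: "'a \<Rightarrow> 'a list"
  assumes tau: "\<forall>a\<in>A. is_word A (\<tau> a) \<and> a \<in> set (\<tau> a)"
    and fac: "\<forall>j\<in>J. \<forall>a\<in>A. \<sigma> j a = morph_app (\<sigma>' j) (\<tau> a)"
    and g: "good A J B \<sigma>'"
  shows "good A J B \<sigma>"
proof -
  from g obtain C :: "'a set" and q :: "'a \<Rightarrow> 'a list" and p :: "'j \<Rightarrow> 'a \<Rightarrow> 'b list" where h: "finite C" "card C < card A"
           "is_morphism A C q" "letter_onto A C q"
           "(\<forall>j\<in>J. is_morphism C (B j) (p j))"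
           "(\<forall>c\<in>C. \<forall>j1\<in>J. \<forall>j2\<in>J. length (p j1 c) = length (p j2 c))"
           "(\<forall>j\<in>J. \<forall>a\<in>A. \<sigma>' j a = morph_app (p j) (q a))"
    unfolding good_def by (elim exE conjE) (rule that; assumption)
  show ?thesis unfolding good_def
  proof (intro exI conjI)
    show "finite C" "card C < card A" by fact+
    show "is_morphism A C (\<lambda>a. morph_app q (\<tau> a))"
      using tau h(3) ma_word unfolding is_morphism_def by blast
    show "letter_onto A C (\<lambda>a. morph_app q (\<tau> a))"
      using h(4) tau unfolding letter_onto_def ma_set by blast
    show "\<forall>c\<in>C. \<forall>j1\<in>J. \<forall>j2\<in>J. length (p j1 c) = length (p j2 c)" by fact
    show "\<forall>j\<in>J. is_morphism C (B j) (p j)" by fact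
    show "\<forall>j\<in>J. \<forall>a\<in>A. \<sigma> j a = morph_app (p j) (morph_app q (\<tau> a))"
    proof (intro ballI)
      fix j a assume j: "j \<in> J" and a: "a \<in> A"
      have "set (\<tau> a) \<subseteq> A" using tau a by (auto simp: is_word_def)
      then have "morph_app (\<sigma>' j) (\<tau> a) = morph_app (\<lambda>b. morph_app (p j) (q b)) (\<tau> a)"
        using h(7) j by (intro ma_cong) auto
      then show "\<sigma> j a = morph_app (p j) (morph_app q (\<tau> a))"
        using fac j a by (simp add: ma_comp)
    qed
  qed
qed


lemma comp_eq: "prefix a b \<or> prefix b a \<Longrightarrow> length a = length b \<Longrightarrow> a = b"
proof -
  assume c: "prefix a b \<or> prefix b a" and l: "length a = length b"
  show "a = b"
  proof (cases "prefix a b")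
    case True then show ?thesis using l by (auto simp: prefix_def)
  next
    case False then have "prefix b a" using c by blast
    then show ?thesis using l by (auto simp: prefix_def)
  qed
qed

lemma comp_split: "prefix a b \<or> prefix b a \<Longrightarrow> length a \<le> length b \<Longrightarrow> b = a @ drop (length a) b"
proof -
  assume c: "prefix a b \<or> prefix b a" and l: "length a \<le> length b"
  have "prefix a b"
  proof (cases "prefix a b")
    case False
    then have "prefix b a" using c by blast
    moreover have "length b \<le> length a" using calculation by (rule prefix_length_le)
    ultimately have "a = b" using l by (auto simp: prefix_def)
    then show ?thesis by simp
  qed
  then obtain zs where "b = a @ zs" by (auto simp: prefix_def)
  then show ?thesis by simp
qed

lemma main:
  "sum ell A = n \<Longrightarrow> finite A \<Longrightarrow>
     (\<forall>j\<in>J. is_morphism A (B j) (\<sigma> j)) \<Longrightarrow>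
     (\<forall>j\<in>J. \<forall>a\<in>A. length (\<sigma> j a) = ell a) \<Longrightarrow>
     is_word A u \<Longrightarrow> is_word A v \<Longrightarrow> length u \<ge> sum ell A \<Longrightarrow> hd u \<noteq> hd v \<Longrightarrow>
     (\<forall>j\<in>J. prefix (morph_app (\<sigma> j) u) (morph_app (\<sigma> j) v)) \<Longrightarrow> good A J B \<sigma>"
proof (induction n arbitrary: \<sigma> ell u v rule: less_induct)
  case (less n \<sigma> ell u v)
    note sn = less.prems(1) and finA = less.prems(2) and morph = less.prems(3)
      and len = less.prems(4) and u = less.prems(5) and v = less.prems(6)
      and ulen = less.prems(7) and hd = less.prems(8) and pref = less.prems(9)
    obtain x us where ux: "u = x # us" using u by (cases u) (auto simp: is_word_def)
    obtain y vs where vy: "v = y # vs" using v by (cases v) (auto simp: is_word_def)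
    have xA: "x \<in> A" and usA: "set us \<subseteq> A" using u ux by (auto simp: is_word_def)
    have yA: "y \<in> A" and vsA: "set vs \<subseteq> A" using v vy by (auto simp: is_word_def)
    have xy: "x \<noteq> y" using hd ux vy by simp
    have nonempty: "\<forall>j\<in>J. \<forall>a\<in>A. \<sigma> j a \<noteq> [] \<and> set (\<sigma> j a) \<subseteq> B j"
      using morph by (auto simp: is_morphism_def is_word_def)
    have comp: "\<forall>j\<in>J. prefix (\<sigma> j x) (\<sigma> j y) \<or> prefix (\<sigma> j y) (\<sigma> j x)"
    proof
      fix j assume j: "j \<in> J"
      have "prefix (\<sigma> j x) (morph_app (\<sigma> j) v)"
        proof -
        have "prefix (\<sigma> j x) (morph_app (\<sigma> j) u)" using ux by simp
        then show ?thesis using pref j by (meson prefix_order.trans)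
      qed
      moreover have "prefix (\<sigma> j y) (morph_app (\<sigma> j) v)" using vy by simp
      ultimately show "prefix (\<sigma> j x) (\<sigma> j y) \<or> prefix (\<sigma> j y) (\<sigma> j x)"
        using prefix_same_cases by blast
    qed
    show "good A J B \<sigma>"
    proof (cases "J = {}")
      case True
      then show ?thesis using merge[OF finA xA yA xy, of J \<sigma> B ell] by simp
    next
      case False
      then obtain j0 where j0: "j0 \<in> J" by blast
      have ellpos: "\<forall>a\<in>A. ell a \<ge> 1"
      proof
        fix a assume a: "a \<in> A"
        have "\<sigma> j0 a \<noteq> []" using nonempty j0 a by auto
        then have "length (\<sigma> j0 a) \<ge> 1" by (cases "\<sigma> j0 a") auto
        then show "ell a \<ge> 1" using len j0 a by simp
      qed
      have ex1: "ell x \<ge> 1" and ey1: "ell y \<ge> 1" using ellpos xA yA by auto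
      have sumge: "sum ell A \<ge> ell x + ell y"
      proof -
        have "sum ell {x, y} \<le> sum ell A"
          using finA xA yA by (intro sum_mono2) auto
        then show ?thesis using xy by simp
      qed
      consider (eq) "ell x = ell y" | (lt) "ell x < ell y" | (gt) "ell y < ell x" by linarith
      then show ?thesis
      proof cases
        case eq
        have "\<forall>j\<in>J. \<sigma> j x = \<sigma> j y"
        proof
          fix j assume j: "j \<in> J"
          show "\<sigma> j x = \<sigma> j y" using comp j len xA yA eq by (intro comp_eq) auto
        qed
        then show ?thesis using merge[OF finA xA yA xy, of J \<sigma> B ell] morph len by blast
      next
        case lt
        define \<sigma>' where "\<sigma>' = (\<lambda>j. (\<sigma> j)(y := drop (ell x) (\<sigma> j y)))"
        define ell' where "ell' = ell(y := ell y - ell x)"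
        define \<tau> where "\<tau> = (\<lambda>a. if a = y then [x, y] else [a])"
        define u' where "u' = morph_app \<tau> us"
        define v' where "v' = y # morph_app \<tau> vs"
        have split: "\<forall>j\<in>J. \<sigma> j y = \<sigma> j x @ drop (ell x) (\<sigma> j y)"
        proof
          fix j assume j: "j \<in> J"
          have "\<sigma> j y = \<sigma> j x @ drop (length (\<sigma> j x)) (\<sigma> j y)"
            using comp j len xA yA lt by (intro comp_split) auto
          then show "\<sigma> j y = \<sigma> j x @ drop (ell x) (\<sigma> j y)"
            using len j xA by simp
        qed
        have tau: "\<forall>a\<in>A. is_word A (\<tau> a) \<and> a \<in> set (\<tau> a)"
          using xA by (auto simp: \<tau>_def is_word_def)
        have fac: "\<forall>j\<in>J. \<forall>a\<in>A. \<sigma> j a = morph_app (\<sigma>' j) (\<tau> a)"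
          using split xy by (auto simp: \<sigma>'_def \<tau>_def)
        have facw: "morph_app (\<sigma> j) w = morph_app (\<sigma>' j) (morph_app \<tau> w)"
          if "j \<in> J" "set w \<subseteq> A" for j w
          using fac that by (simp add: ma_comp, intro ma_cong) auto
        have "good A J B \<sigma>'"
        proof (rule less.IH[where ell=ell' and \<sigma>=\<sigma>' and u=u' and v=v'])
          have s: "sum ell' A = sum ell A - ell x"
          proof -
            have "sum ell' A = ell' y + sum ell' (A - {y})" using finA yA by (simp add: sum.remove)
            also have "sum ell' (A - {y}) = sum ell (A - {y})" by (intro sum.cong) (auto simp: ell'_def)
            finally show ?thesis using finA yA lt by (simp add: ell'_def sum.remove)
          qed
          show "sum ell' A < n" using s sn ex1 sumge by linarith
          show "sum ell' A = sum ell' A" ..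
          show "finite A" by fact
          show "\<forall>j\<in>J. is_morphism A (B j) (\<sigma>' j)"
            using nonempty len lt yA
            by (auto simp: is_morphism_def is_word_def \<sigma>'_def; blast dest: in_set_dropD)
          show "\<forall>j\<in>J. \<forall>a\<in>A. length (\<sigma>' j a) = ell' a"
            using len by (auto simp: \<sigma>'_def ell'_def)
          have "length us \<ge> 1" using ulen sumge ex1 ey1 ux by auto
          then have usne: "us \<noteq> []" by auto
          have "length u' \<ge> length us" unfolding u'_def by (rule ma_len) (auto simp: \<tau>_def)
          then show "sum ell' A \<le> length u'" using s ulen ux ex1 by auto
          show "is_word A u'" using usne usA xA yA unfolding u'_def is_word_def
            by (cases us) (auto simp: ma_set \<tau>_def split: if_splits)
          show "is_word A v'" using vsA xA yA unfolding v'_def is_word_def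
            by (auto simp: ma_set \<tau>_def split: if_splits)
          show "hd u' \<noteq> hd v'" using usne xy unfolding u'_def v'_def
            by (cases us) (auto simp: \<tau>_def)
          show "\<forall>j\<in>J. prefix (morph_app (\<sigma>' j) u') (morph_app (\<sigma>' j) v')"
          proof
            fix j assume j: "j \<in> J"
            have "prefix (\<sigma> j x @ morph_app (\<sigma>' j) u') (\<sigma> j x @ morph_app (\<sigma>' j) v')"
            proof -
              have "morph_app (\<sigma> j) u = \<sigma> j x @ morph_app (\<sigma>' j) u'"
                using facw[OF j usA] ux by (simp add: u'_def)
              moreover have "morph_app (\<sigma> j) v = \<sigma> j x @ morph_app (\<sigma>' j) v'"
                using facw[OF j vsA] vy split j by (simp add: v'_def \<sigma>'_def)
              ultimately show ?thesis using bspec[OF pref j] by (simp only:)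
            qed
            then show "prefix (morph_app (\<sigma>' j) u') (morph_app (\<sigma>' j) v')" by simp
          qed
        qed
        then show ?thesis using lift[OF tau fac] by blast
      next
        case gt
        define \<sigma>' where "\<sigma>' = (\<lambda>j. (\<sigma> j)(x := drop (ell y) (\<sigma> j x)))"
        define ell' where "ell' = ell(x := ell x - ell y)"
        define \<tau> where "\<tau> = (\<lambda>a. if a = x then [y, x] else [a])"
        define u' where "u' = x # morph_app \<tau> us"
        define v' where "v' = morph_app \<tau> vs"
        have split: "\<forall>j\<in>J. \<sigma> j x = \<sigma> j y @ drop (ell y) (\<sigma> j x)"
        proof
          fix j assume j: "j \<in> J"
          have "\<sigma> j x = \<sigma> j y @ drop (length (\<sigma> j y)) (\<sigma> j x)"
            using comp j len xA yA gt by (intro comp_split) auto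
          then show "\<sigma> j x = \<sigma> j y @ drop (ell y) (\<sigma> j x)"
            using len j yA by simp
        qed
        have tau: "\<forall>a\<in>A. is_word A (\<tau> a) \<and> a \<in> set (\<tau> a)"
          using yA by (auto simp: \<tau>_def is_word_def)
        have fac: "\<forall>j\<in>J. \<forall>a\<in>A. \<sigma> j a = morph_app (\<sigma>' j) (\<tau> a)"
          using split xy by (auto simp: \<sigma>'_def \<tau>_def)
        have facw: "morph_app (\<sigma> j) w = morph_app (\<sigma>' j) (morph_app \<tau> w)"
          if "j \<in> J" "set w \<subseteq> A" for j w
          using fac that by (simp add: ma_comp, intro ma_cong) auto
        have vsne: "vs \<noteq> []"
        proof
          assume "vs = []"
          then have "length (morph_app (\<sigma> j0) v) = ell y" using vy len j0 yA by simp
          moreover have "length (morph_app (\<sigma> j0) v) \<ge> length (morph_app (\<sigma> j0) u)"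
            using pref j0 prefix_length_le by blast
          moreover have "length (morph_app (\<sigma> j0) u) \<ge> ell x" using ux len j0 xA by simp
          ultimately show False using gt by simp
        qed
        have "good A J B \<sigma>'"
        proof (rule less.IH[where ell=ell' and \<sigma>=\<sigma>' and u=u' and v=v'])
          have s: "sum ell' A = sum ell A - ell y"
          proof -
            have "sum ell' A = ell' x + sum ell' (A - {x})" using finA xA by (simp add: sum.remove)
            also have "sum ell' (A - {x}) = sum ell (A - {x})" by (intro sum.cong) (auto simp: ell'_def)
            finally show ?thesis using finA xA gt by (simp add: ell'_def sum.remove)
          qed
          show "sum ell' A < n" using s sn ey1 sumge by linarith
          show "sum ell' A = sum ell' A" ..
          show "finite A" by fact
          show "\<forall>j\<in>J. is_morphism A (B j) (\<sigma>' j)"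
            using nonempty len gt xA
            by (auto simp: is_morphism_def is_word_def \<sigma>'_def; blast dest: in_set_dropD)
          show "\<forall>j\<in>J. \<forall>a\<in>A. length (\<sigma>' j a) = ell' a"
            using len by (auto simp: \<sigma>'_def ell'_def)
          have "length (morph_app \<tau> us) \<ge> length us" by (rule ma_len) (auto simp: \<tau>_def)
          then show "sum ell' A \<le> length u'" using s ulen ux by (auto simp: u'_def)
          show "is_word A u'" using usA xA yA unfolding u'_def is_word_def
            by (auto simp: ma_set \<tau>_def split: if_splits)
          show "is_word A v'" using vsne vsA xA yA unfolding v'_def is_word_def
            by (cases vs) (auto simp: ma_set \<tau>_def split: if_splits)
          show "hd u' \<noteq> hd v'" using vsne xy unfolding u'_def v'_def
            by (cases vs) (auto simp: \<tau>_def)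
          show "\<forall>j\<in>J. prefix (morph_app (\<sigma>' j) u') (morph_app (\<sigma>' j) v')"
          proof
            fix j assume j: "j \<in> J"
            have "prefix (\<sigma> j y @ morph_app (\<sigma>' j) u') (\<sigma> j y @ morph_app (\<sigma>' j) v')"
            proof -
              have "morph_app (\<sigma> j) u = \<sigma> j y @ morph_app (\<sigma>' j) u'"
                using facw[OF j usA] ux split j by (simp add: u'_def \<sigma>'_def)
              moreover have "morph_app (\<sigma> j) v = \<sigma> j y @ morph_app (\<sigma>' j) v'"
                using facw[OF j vsA] vy by (simp add: v'_def)
              ultimately show ?thesis using bspec[OF pref j] by (simp only:)
            qed
            then show "prefix (morph_app (\<sigma>' j) u') (morph_app (\<sigma>' j) v')" by simp
          qed
        qed
        then show ?thesis using lift[OF tau fac] by blast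
      qed
    qed
  qed

theorem lemma3p2:
  fixes A :: "'a set" and J :: "'j set" and B :: "'j \<Rightarrow> 'b set"
    and \<sigma> :: "'j \<Rightarrow> 'a \<Rightarrow> 'b list" and ell :: "'a \<Rightarrow> nat"
    and u v :: "'a list"
  assumes finA: "finite A"
    and finB: "\<forall>j\<in>J. finite (B j)"
    and morph: "\<forall>j\<in>J. is_morphism A (B j) (\<sigma> j)"
    and len: "\<forall>j\<in>J. \<forall>a\<in>A. length (\<sigma> j a) = ell a"
    and u: "is_word A u" and v: "is_word A v"
    and ulen: "length u \<ge> (\<Sum>a\<in>A. ell a)"
    and hd_diff: "hd u \<noteq> hd v"
    and pref: "\<forall>j\<in>J. prefix (morph_app (\<sigma> j) u) (morph_app (\<sigma> j) v)"
  shows "\<exists>(C :: 'a set) (q :: 'a \<Rightarrow> 'a list) (p :: 'j \<Rightarrow> 'a \<Rightarrow> 'b list).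
           finite C \<and> card C < card A \<and>
           is_morphism A C q \<and> letter_onto A C q \<and>
           (\<forall>j\<in>J. is_morphism C (B j) (p j)) \<and>
           (\<forall>c\<in>C. \<forall>j1\<in>J. \<forall>j2\<in>J. length (p j1 c) = length (p j2 c)) \<and>
           (\<forall>j\<in>J. \<forall>a\<in>A. \<sigma> j a = morph_app (p j) (q a))"
proof -
  have "good A J B \<sigma>"
    by (rule main[OF refl finA morph len u v ulen hd_diff pref])
  then show ?thesis by (simp only: good_def)
qed

end
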